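(* The inquisitive disjunction $\vee$ is strongly undefinable in extended propositional dependence logic $\mathcal D^+$. Concretely: for every context $\varphi(a,b)$ of $\mathcal D^+$ and every pair of distinct propositional letters $p,q$ not occurring in $\varphi(a,b)$, letting $M_{pq}$ be the model with worlds $w_1,w_2,w_3$ in which $p$ is true exactly at $w_1,w_2$, $q$ is true exactly at $w_2,w_3$, and all other letters are false everywhere, we have $\varphi(=\!(p),=\!(q))\not\equiv_{M_{pq}}=\!(p)\vee=\!(q)$; in particular $\varphi(=\!(p),=\!(q))\not\equiv=\!(p)\vee=\!(q)$.
   Context: Formulas of $\mathcal D^+$: $\varphi::= p\mid\neg p\mid\bot\mid=\!(\alpha_1,\dots,\alpha_n;\beta)\mid\varphi\land\varphi\mid\varphi\otimes\varphi$, where $p$ is a propositional letter and $\alpha_1,\dots,\alpha_n,\beta$ are classical formulas (formulas built from $p,\neg p,\bot,\land,\otimes$ without dependence atoms); $=\!(\beta)$ denotes the case $n=0$. A context $\varphi(a,b)$ is a $\mathcal D^+$ formula in which the letters $a,b$ do not occur negated nor inside a dependence atom; $\varphi(\psi,\chi)$ replaces $a$ by $\psi$ and $b$ by $\chi$. A model is $M=(W,V)$, $V(w)$ the set of letters true at $w$. Support at $s\subseteq W$: $s\models p$ iff $p$ true at all $w\in s$; $s\models\neg p$ iff $p$ false at all $w\in s$; $s\models\bot$ iff $s=\emptyset$; $s\models\psi\land\chi$ iff both; $s\models\psi\otimes\chi$ iff $s=t_1\cup t_2$ with $t_1\models\psi$, $t_2\models\chi$; $s\models=\!(\alpha_1,\dots,\alpha_n;\beta)$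 iff for all $w,w'\in s$, if ($\{w\}\models\alpha_1\land\dots\land\alpha_n$ iff $\{w'\}\models\alpha_1\land\dots\land\alpha_n$) then ($\{w\}\models\beta$ iff $\{w'\}\models\beta$); $s\models\psi\vee\chi$ iff $s\models\psi$ or $s\models\chi$ (inquisitive disjunction, not in $\mathcal D^+$). $\psi\equiv_M\chi$: same supporting states in $M$; $\psi\equiv\chi$: $\psi\equiv_M\chi$ for all $M$. Strong undefinability of a binary connective $\circ$ means: there are formulas $\psi,\chi$ and a model $M$ such that for every template (here: context) $\varphi(a,b)$, $\varphi(\psi',\chi')\not\equiv_{M'}\psi'\circ\chi'$, where $\psi',\chi'$ differ from $\psi,\chi$ only by renaming of atoms and $M'$ is isomorphic to $M$. *)

theory Defs
  imports Main
begin

text \<open>Propositional letters are natural numbers.  Formulas of D+ (with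
  classicality of the arguments of dependence atoms expressed by a predicate),
  plus the inquisitive disjunction (not part of D+).\<close>

datatype form =
    Atom nat
  | NegAtom nat
  | Bot
  | Dep "form list" form
  | Conj form form
  | Tens form form
  | IDisj form form

fun classical :: "form \<Rightarrow> bool" where
  "classical (Atom p) = True"
| "classical (NegAtom p) = True"
| "classical Bot = True"
| "classical (Dep as b) = False"
| "classical (Conj f g) = (classical f \<and> classical g)"
| "classical (Tens f g) = (classical f \<and> classical g)"
| "classical (IDisj f g) = False"

fun dplus :: "form \<Rightarrow> bool" where
  "dplus (Atom p) = True"
| "dplus (NegAtom p) = True"
| "dplus Bot = True"
| "dplus (Dep as b) = ((\<forall>a\<in>set as. classical a) \<and> classical b)"
| "dplus (Conj f g) = (dplus f \<and> dplus g)"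
| "dplus (Tens f g) = (dplus f \<and> dplus g)"
| "dplus (IDisj f g) = False"

fun letters :: "form \<Rightarrow> nat set" where
  "letters (Atom p) = {p}"
| "letters (NegAtom p) = {p}"
| "letters Bot = {}"
| "letters (Dep as b) = (\<Union>a\<in>set as. letters a) \<union> letters b"
| "letters (Conj f g) = letters f \<union> letters g"
| "letters (Tens f g) = letters f \<union> letters g"
| "letters (IDisj f g) = letters f \<union> letters g"

fun bad_letters :: "form \<Rightarrow> nat set" where
  "bad_letters (Atom p) = {}"
| "bad_letters (NegAtom p) = {p}"
| "bad_letters Bot = {}"
| "bad_letters (Dep as b) = letters (Dep as b)"
| "bad_letters (Conj f g) = bad_letters f \<union> bad_letters g"
| "bad_letters (Tens f g) = bad_letters f \<union> bad_letters g"
| "bad_letters (IDisj f g) = bad_letters f \<union> bad_letters g"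

definition is_context :: "form \<Rightarrow> nat \<Rightarrow> nat \<Rightarrow> bool" where
  "is_context phi a b \<longleftrightarrow> a \<noteq> b \<and> dplus phi \<and> a \<notin> bad_letters phi \<and> b \<notin> bad_letters phi"

fun subst2 :: "form \<Rightarrow> nat \<Rightarrow> nat \<Rightarrow> form \<Rightarrow> form \<Rightarrow> form" where
  "subst2 (Atom p) a b psi chi = (if p = a then psi else if p = b then chi else Atom p)"
| "subst2 (NegAtom p) a b psi chi = NegAtom p"
| "subst2 Bot a b psi chi = Bot"
| "subst2 (Dep as c) a b psi chi = Dep as c"
| "subst2 (Conj f g) a b psi chi = Conj (subst2 f a b psi chi) (subst2 g a b psi chi)"
| "subst2 (Tens f g) a b psi chi = Tens (subst2 f a b psi chi) (subst2 g a b psi chi)"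
| "subst2 (IDisj f g) a b psi chi = IDisj (subst2 f a b psi chi) (subst2 g a b psi chi)"

text \<open>Team semantics; V w is the set of letters true at world w.
  Worlds are drawn from an arbitrary type; teams are sets of worlds.\<close>
fun supp :: "('w \<Rightarrow> nat set) \<Rightarrow> 'w set \<Rightarrow> form \<Rightarrow> bool" where
  "supp V s (Atom p) = (\<forall>w\<in>s. p \<in> V w)"
| "supp V s (NegAtom p) = (\<forall>w\<in>s. p \<notin> V w)"
| "supp V s Bot = (s = {})"
| "supp V s (Dep as b) = (\<forall>w\<in>s. \<forall>w'\<in>s.
      ((\<forall>a\<in>set as. supp V {w} a) \<longleftrightarrow> (\<forall>a\<in>set as. supp V {w'} a))
      \<longrightarrow> (supp V {w} b \<longleftrightarrow> supp V {w'} b))"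
| "supp V s (Conj f g) = (supp V s f \<and> supp V s g)"
| "supp V s (Tens f g) = (\<exists>t1 t2. s = t1 \<union> t2 \<and> supp V t1 f \<and> supp V t2 g)"
| "supp V s (IDisj f g) = (supp V s f \<or> supp V s g)"

definition equiv_in :: "'w set \<Rightarrow> ('w \<Rightarrow> nat set) \<Rightarrow> form \<Rightarrow> form \<Rightarrow> bool" where
  "equiv_in W V f g \<longleftrightarrow> (\<forall>s. s \<subseteq> W \<longrightarrow> (supp V s f \<longleftrightarrow> supp V s g))"

text \<open>Global equivalence: equivalent in every model (worlds of type nat suffice
  to host the models considered; we quantify over all W :: nat set and V).\<close>
definition equiv_all :: "form \<Rightarrow> form \<Rightarrow> bool" where
  "equiv_all f g \<longleftrightarrow> (\<forall>(W::nat set) V. equiv_in W V f g)"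

abbreviation const_atom :: "form \<Rightarrow> form" where
  "const_atom beta \<equiv> Dep [] beta"

definition Wpq :: "nat set" where "Wpq = {1,2,3}"

definition Vpq :: "nat \<Rightarrow> nat \<Rightarrow> nat \<Rightarrow> nat set" where
  "Vpq p q w = (if w = 1 then {p} else if w = 2 then {p,q} else if w = 3 then {q} else {})"

end

theory Submission
  imports Defs
begin

lemma supp_empty: "supp V {} f"
  by (induction f) auto

lemma int_mono_eq: "X \<inter> L = Y \<inter> L \<Longrightarrow> L' \<subseteq> L \<Longrightarrow> X \<inter> L' = Y \<inter> L'"
  by blast

lemma ball_int_mono: "\<forall>w\<in>s. V w \<inter> L = V' w \<inter> L \<Longrightarrow> L' \<subseteq> L \<Longrightarrow> \<forall>w\<in>s. V w \<inter> L' = V' w \<inter> L'"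
  using int_mono_eq by metis

lemma supp_agree:
  "(\<forall>w\<in>s. V w \<inter> letters f = V' w \<inter> letters f) \<Longrightarrow> supp V s f = supp V' s f"
proof (induction f arbitrary: s)
  case (Atom x) then show ?case by auto
next
  case (NegAtom x) then show ?case by auto
next
  case Bot then show ?case by simp
next
  case (Dep as c)
  have h: "\<And>w. w \<in> s \<Longrightarrow> (\<forall>a\<in>set as. supp V {w} a) = (\<forall>a\<in>set as. supp V' {w} a)
        \<and> supp V {w} c = supp V' {w} c"
  proof -
    fix w assume w: "w \<in> s"
    have A: "\<forall>a\<in>set as. supp V {w} a = supp V' {w} a"
    proof
      fix a assume a: "a \<in> set as"
      have "letters a \<subseteq> letters (Dep as c)" using a by auto
      then have "V w \<inter> letters a = V' w \<inter> letters a"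
        using int_mono_eq[OF bspec[OF Dep.prems w]] by simp
      then show "supp V {w} a = supp V' {w} a"
        using Dep.IH(1)[OF a, of "{w}"] by simp
    qed
    have "letters c \<subseteq> letters (Dep as c)" by auto
    then have "V w \<inter> letters c = V' w \<inter> letters c"
      using int_mono_eq[OF bspec[OF Dep.prems w]] by simp
    then have C: "supp V {w} c = supp V' {w} c"
      using Dep.IH(2)[of "{w}"] by simp
    from A C show "(\<forall>a\<in>set as. supp V {w} a) = (\<forall>a\<in>set as. supp V' {w} a)
        \<and> supp V {w} c = supp V' {w} c" by blast
  qed
  show ?case
    apply (simp only: supp.simps)
    apply (intro ball_cong[OF refl])
    subgoal for w w' using h[of w] h[of w'] by simp
    done
next
  case (Conj f g)
  have "letters f \<subseteq> letters (Conj f g)" "letters g \<subseteq> letters (Conj f g)" by auto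
  then have "\<forall>w\<in>s. V w \<inter> letters f = V' w \<inter> letters f" "\<forall>w\<in>s. V w \<inter> letters g = V' w \<inter> letters g"
    using ball_int_mono[OF Conj.prems] by simp_all
  then show ?case using Conj.IH by simp
next
  case (Tens f g)
  have "letters f \<subseteq> letters (Tens f g)" "letters g \<subseteq> letters (Tens f g)" by auto
  then have pf: "\<forall>w\<in>s. V w \<inter> letters f = V' w \<inter> letters f" and pg: "\<forall>w\<in>s. V w \<inter> letters g = V' w \<inter> letters g"
    using ball_int_mono[OF Tens.prems] by simp_all
  show ?case
  proof -
    have H: "\<And>t1 t2. s = t1 \<union> t2 \<Longrightarrow> (supp V t1 f = supp V' t1 f) \<and> (supp V t2 g = supp V' t2 g)"
    proof -
      fix t1 t2 assume st: "s = t1 \<union> t2"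
      show "(supp V t1 f = supp V' t1 f) \<and> (supp V t2 g = supp V' t2 g)"
        using Tens.IH(1)[of t1] Tens.IH(2)[of t2] pf pg st by simp
    qed
    show ?thesis
    proof
      assume "supp V s (Tens f g)"
      then obtain t1 t2 where st: "s = t1 \<union> t2" "supp V t1 f" "supp V t2 g" by auto
      then show "supp V' s (Tens f g)" using H[OF st(1)] unfolding supp.simps
        by (intro exI[of _ t1] exI[of _ t2]) simp
    next
      assume "supp V' s (Tens f g)"
      then obtain t1 t2 where st: "s = t1 \<union> t2" "supp V' t1 f" "supp V' t2 g" by auto
      then show "supp V s (Tens f g)" using H[OF st(1)] unfolding supp.simps
        by (intro exI[of _ t1] exI[of _ t2]) simp
    qed
  qed
next
  case (IDisj f g)
  have "letters f \<subseteq> letters (IDisj f g)" "letters g \<subseteq> letters (IDisj f g)" by auto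
  then have "\<forall>w\<in>s. V w \<inter> letters f = V' w \<inter> letters f" "\<forall>w\<in>s. V w \<inter> letters g = V' w \<inter> letters g"
    using ball_int_mono[OF IDisj.prems] by simp_all
  then show ?case using IDisj.IH by simp
qed

lemma bi: "(\<forall>x\<in>g ` s. P x) = (\<forall>y\<in>s. P (g y))" by auto
lemma supp_rename: "supp V (g ` s) f = supp (V \<circ> g) s f"
proof (induction f arbitrary: s)
  case (Dep as c)
  have e: "g ` {w} = {g w}" for w by simp
  have h1: "supp V {g w} a = supp (V \<circ> g) {w} a" if "a \<in> set as" for w a
    using Dep.IH(1)[OF that, of "{w}"] by (simp only: e)
  have h2: "supp V {g w} c = supp (V \<circ> g) {w} c" for w
    using Dep.IH(2)[of "{w}"] by (simp only: e)
  have h1': "(\<forall>a\<in>set as. supp V {g w} a) = (\<forall>a\<in>set as. supp (V \<circ> g) {w} a)" for w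
    using h1 by (meson)
  show ?case
    by (simp only: supp.simps bi h1' h2)
next
  case (Tens f1 f2)
  show ?case
  proof
    assume "supp V (g ` s) (Tens f1 f2)"
    then obtain t1 t2 where t: "g ` s = t1 \<union> t2" "supp V t1 f1" "supp V t2 f2" by auto
    define u1 where "u1 = {x\<in>s. g x \<in> t1}"
    define u2 where "u2 = {x\<in>s. g x \<in> t2}"
    have i1: "g ` u1 = t1" unfolding u1_def using t(1) by auto
    have i2: "g ` u2 = t2" unfolding u2_def using t(1) by auto
    have su: "s = u1 \<union> u2" unfolding u1_def u2_def using t(1) by auto
    have "supp (V \<circ> g) u1 f1" using Tens.IH(1)[of u1] i1 t(2) by metis
    moreover have "supp (V \<circ> g) u2 f2" using Tens.IH(2)[of u2] i2 t(3) by metis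
    ultimately show "supp (V \<circ> g) s (Tens f1 f2)" unfolding supp.simps
      by (intro exI[of _ u1] exI[of _ u2]) (simp add: su)
  next
    assume "supp (V \<circ> g) s (Tens f1 f2)"
    then obtain u1 u2 where u: "s = u1 \<union> u2" "supp (V \<circ> g) u1 f1" "supp (V \<circ> g) u2 f2" by auto
    have im: "g ` s = g ` u1 \<union> g ` u2" using u(1) by auto
    have "supp V (g ` u1) f1" using Tens.IH(1)[of u1] u(2) by metis
    moreover have "supp V (g ` u2) f2" using Tens.IH(2)[of u2] u(3) by metis
    ultimately show "supp V (g ` s) (Tens f1 f2)" unfolding supp.simps
      by (intro exI[of _ "g ` u1"] exI[of _ "g ` u2"]) (simp add: im)
  qed
qed (auto simp: comp_def)

lemma const_nonempty:
  assumes "p \<notin> letters f" "q \<notin> letters f" "s \<subseteq> Wpq" "s \<noteq> {}"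
  shows "supp (Vpq p q) s f = supp (\<lambda>_. {}) {0::nat} f"
proof -
  have "supp (Vpq p q) s f = supp (\<lambda>_. {}) s f"
    apply (rule supp_agree)
    using assms by (auto simp: Wpq_def Vpq_def)
  also have "\<dots> = supp ((\<lambda>_. {}) \<circ> (\<lambda>_. 0::nat)) s f" by (simp add: comp_def)
  also have "\<dots> = supp (\<lambda>_. {}) ((\<lambda>_. 0::nat) ` s) f" by (simp add: supp_rename)
  also have "(\<lambda>_. 0::nat) ` s = {0}" using assms(4) by auto
  finally show ?thesis .
qed

definition Inv :: "nat \<Rightarrow> nat \<Rightarrow> form \<Rightarrow> bool" where
  "Inv p q f \<longleftrightarrow> ((\<forall>s. s \<subseteq> Wpq \<longrightarrow> s \<noteq> {} \<longrightarrow> \<not> supp (Vpq p q) s f)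
      \<or> (\<forall>w\<in>Wpq. supp (Vpq p q) {w} f))
    \<and> (supp (Vpq p q) {1,2} f \<and> supp (Vpq p q) {2,3} f \<longrightarrow> supp (Vpq p q) {1,3} f)"

lemma Inv_base:
  assumes "p \<notin> letters f" "q \<notin> letters f"
  shows "Inv p q f"
proof (cases "supp (\<lambda>_. {}) {0::nat} f")
  case True
  have "supp (Vpq p q) s f" if "s \<subseteq> Wpq" "s \<noteq> {}" for s
    using const_nonempty[OF assms that] True by simp
  then show ?thesis unfolding Inv_def by (auto simp: Wpq_def)
next
  case False
  have "\<not> supp (Vpq p q) s f" if "s \<subseteq> Wpq" "s \<noteq> {}" for s
    using const_nonempty[OF assms that] False by simp
  then show ?thesis unfolding Inv_def by (auto simp: Wpq_def)
qed

lemma Inv_main: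
  assumes "dplus phi" "p \<notin> letters phi" "q \<notin> letters phi" "p \<noteq> q"
  shows "Inv p q (subst2 phi a b (const_atom (Atom p)) (const_atom (Atom q)))"
  using assms
proof (induction phi)
  case (Atom r)
  show ?case
  proof (cases "r = a \<or> r = b")
    case True
    then show ?thesis using Atom.prems
      by (auto simp: Inv_def Wpq_def Vpq_def)
  next
    case False
    then show ?thesis using Atom.prems Inv_base[of p "Atom r" q] by auto
  qed
next
  case (NegAtom r) then show ?case using Inv_base[of p "NegAtom r" q] by auto
next
  case Bot then show ?case using Inv_base[of p Bot q] by auto
next
  case (Dep as c) then show ?case using Inv_base[of p "Dep as c" q] by simp
next
  case (Conj f g)
  then have "Inv p q (subst2 f a b (const_atom (Atom p)) (const_atom (Atom q)))"
    "Inv p q (subst2 g a b (const_atom (Atom p)) (const_atom (Atom q)))" by auto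
  then show ?case unfolding Inv_def by auto
next
  case (Tens f g)
  let ?F = "subst2 f a b (const_atom (Atom p)) (const_atom (Atom q))"
  let ?G = "subst2 g a b (const_atom (Atom p)) (const_atom (Atom q))"
  have IF: "Inv p q ?F" and IG: "Inv p q ?G" using Tens by auto
  let ?V = "Vpq p q"
  show ?case
  proof (cases "\<forall>s. s \<subseteq> Wpq \<longrightarrow> s \<noteq> {} \<longrightarrow> \<not> supp ?V s ?F")
    case True
    have "supp ?V s (Tens ?F ?G) = supp ?V s ?G" if "s \<subseteq> Wpq" for s
    proof
      assume "supp ?V s (Tens ?F ?G)"
      then obtain t1 t2 where "s = t1 \<union> t2" "supp ?V t1 ?F" "supp ?V t2 ?G" by auto
      then show "supp ?V s ?G" using True that by (metis Un_empty_left le_sup_iff)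
    next
      assume "supp ?V s ?G"
      then show "supp ?V s (Tens ?F ?G)" using supp_empty by (metis Un_empty_left supp.simps(6))
    qed
    then have "Inv p q (Tens ?F ?G)" using IG unfolding Inv_def
      by (simp add: Wpq_def)
    then show ?thesis by simp
  next
    case F: False
    show ?thesis
    proof (cases "\<forall>s. s \<subseteq> Wpq \<longrightarrow> s \<noteq> {} \<longrightarrow> \<not> supp ?V s ?G")
      case True
      have "supp ?V s (Tens ?F ?G) = supp ?V s ?F" if "s \<subseteq> Wpq" for s
      proof
        assume "supp ?V s (Tens ?F ?G)"
        then obtain t1 t2 where "s = t1 \<union> t2" "supp ?V t1 ?F" "supp ?V t2 ?G" by auto
        then show "supp ?V s ?F" using True that by (metis Un_empty_right le_sup_iff)
      next
        assume "supp ?V s ?F"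
        then show "supp ?V s (Tens ?F ?G)" using supp_empty by (metis Un_empty_right supp.simps(6))
      qed
      then have "Inv p q (Tens ?F ?G)" using IF unfolding Inv_def
        by (simp add: Wpq_def)
      then show ?thesis by simp
    next
      case False
      have sF: "\<forall>w\<in>Wpq. supp ?V {w} ?F" using IF F unfolding Inv_def by blast
      have sG: "\<forall>w\<in>Wpq. supp ?V {w} ?G" using IG False unfolding Inv_def by blast
      have s1: "\<forall>w\<in>Wpq. supp ?V {w} (Tens ?F ?G)"
        using sF supp_empty by (metis Un_empty_right supp.simps(6))
      have "supp ?V {1} ?F" "supp ?V {3} ?G" using sF sG unfolding Wpq_def by auto
      moreover have "{1,3} = {1} \<union> {3::nat}" by auto
      ultimately have "supp ?V {1,3} (Tens ?F ?G)" by (metis supp.simps(6))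
      then have "Inv p q (Tens ?F ?G)" using s1 unfolding Inv_def by blast
      then show ?thesis by simp
    qed
  qed
next
  case (IDisj f g) then show ?case by simp
qed

theorem theorem7:
  fixes phi :: form and a b p q :: nat
  assumes "is_context phi a b"
    and "p \<noteq> q"
    and "p \<notin> letters phi" and "q \<notin> letters phi"
  shows "\<not> equiv_in Wpq (Vpq p q) (subst2 phi a b (const_atom (Atom p)) (const_atom (Atom q)))
                (IDisj (const_atom (Atom p)) (const_atom (Atom q)))
       \<and> \<not> equiv_all (subst2 phi a b (const_atom (Atom p)) (const_atom (Atom q)))
                (IDisj (const_atom (Atom p)) (const_atom (Atom q)))"
proof -
  let ?P = "subst2 phi a b (const_atom (Atom p)) (const_atom (Atom q))"
  let ?D = "IDisj (const_atom (Atom p)) (const_atom (Atom q))"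
  have I: "Inv p q ?P" using Inv_main assms is_context_def by auto
  have d1: "supp (Vpq p q) {1,2} ?D" by (auto simp: Vpq_def)
  have d2: "supp (Vpq p q) {2,3} ?D" by (auto simp: Vpq_def)
  have d3: "\<not> supp (Vpq p q) {1,3} ?D" using assms(2) by (auto simp: Vpq_def)
  have ne: "\<not> equiv_in Wpq (Vpq p q) ?P ?D"
  proof
    assume "equiv_in Wpq (Vpq p q) ?P ?D"
    then have "\<forall>s. s \<subseteq> Wpq \<longrightarrow> supp (Vpq p q) s ?P = supp (Vpq p q) s ?D"
      unfolding equiv_in_def by blast
    then show False using I d1 d2 d3 unfolding Inv_def Wpq_def by auto
  qed
  moreover have "\<not> equiv_all ?P ?D" using ne unfolding equiv_all_def by blast
  ultimately show ?thesis by blast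
qed

end
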